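(* Let $0<a<1$ and $r>0$. For $0\leq t\leq 1$ set $\Delta_t=\{(z,w)\in\mathbb{C}^2:|z|<(1+t)r,\ |w|<(1+2t)r\}$ and \[ F_t(z,w)=\big((1-t)z^2+(a+rt)w,\ az\big),\qquad \Omega_t=F_t(\Delta_t). \] Then: (i) $\Omega_t\subset\subset\Omega_s$ whenever $0\leq t<s\leq1$; (ii) $\Omega_t=\bigcup_{0\leq t'<t}\Omega_{t'}$ for every $0<t\leq 1$; (iii) $\overline{\Omega_t}=\bigcap_{t<s\leq1}\Omega_s$ for every $0\leq t<1$. *)

theory Defs
  imports "HOL-Analysis.Analysis"
begin

definition Delta :: "real \<Rightarrow> real \<Rightarrow> (complex \<times> complex) set" where
  "Delta r t = {(z, w). norm z < (1 + t) * r \<and> norm w < (1 + 2 * t) * r}"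

definition Fmap :: "real \<Rightarrow> real \<Rightarrow> real \<Rightarrow> complex \<times> complex \<Rightarrow> complex \<times> complex" where
  "Fmap a r t = (\<lambda>(z, w). ((1 - of_real t) * z ^ 2 + (of_real a + of_real r * of_real t) * w,
                           of_real a * z))"

definition Omega :: "real \<Rightarrow> real \<Rightarrow> real \<Rightarrow> (complex \<times> complex) set" where
  "Omega a r t = Fmap a r t ` Delta r t"

definition compactly_contained :: "'a::topological_space set \<Rightarrow> 'a set \<Rightarrow> bool" where
  "compactly_contained A B \<longleftrightarrow> compact (closure A) \<and> closure A \<subseteq> B"

end

theory Submission
  imports Defs
begin

lemma Fmap_eq: "Fmap a r t (z,w) = ((1 - of_real t) * z^2 + (of_real a + of_real r * of_real t) * w, of_real a * z)"
  by (simp add: Fmap_def)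

lemma Fmap_fun: "Fmap a r t = (\<lambda>p. ((1 - of_real t) * fst p ^ 2 + (of_real a + of_real r * of_real t) * snd p, of_real a * fst p))"
  by (simp add: Fmap_def fun_eq_iff)

lemma Fmap_cont: "continuous_on S (Fmap a r t)"
  unfolding Fmap_fun by (intro continuous_intros)

lemma Delta_Times: "Delta r t = ball 0 ((1 + t) * r) \<times> ball 0 ((1 + 2 * t) * r)"
  by (auto simp: Delta_def)

definition Dc :: "real \<Rightarrow> real \<Rightarrow> (complex \<times> complex) set" where
  "Dc r t = cball 0 ((1 + t) * r) \<times> cball 0 ((1 + 2 * t) * r)"

lemma closure_Omega:
  assumes "0 \<le> t" "0 < r"
  shows "closure (Omega a r t) = Fmap a r t ` Dc r t"
proof -
  have cD: "closure (Delta r t) = Dc r t"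
    using assms unfolding Delta_Times Dc_def closure_Times
    by (simp add: closure_ball)
  have comp: "compact (Fmap a r t ` Dc r t)"
    unfolding Dc_def by (intro compact_continuous_image Fmap_cont compact_Times compact_cball)
  have "Omega a r t \<subseteq> Fmap a r t ` Dc r t"
    unfolding Omega_def using closure_subset[of "Delta r t"] cD by auto
  hence 1: "closure (Omega a r t) \<subseteq> Fmap a r t ` Dc r t"
    using comp by (simp add: closure_minimal compact_imp_closed)
  have 2: "Fmap a r t ` closure (Delta r t) \<subseteq> closure (Omega a r t)"
    by (rule image_closure_subset) (auto simp: Fmap_cont Omega_def closure_subset)
  show ?thesis using 1 2 cD by auto
qed

lemma nzc: "0 < a + r * v \<Longrightarrow> (of_real a + of_real r * of_real v :: complex) \<noteq> 0"
  by (metis of_real_add of_real_mult of_real_eq_0_iff less_irrefl)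

lemma Fmap_inv:
  assumes "0 < a" "0 \<le> s" "0 < r" "p = Fmap a r s (z,w)"
  shows "z = snd p / of_real a"
    "w = (fst p - (1 - of_real s) * (snd p / of_real a)^2) / (of_real a + of_real r * of_real s)"
proof -
  have a0: "(of_real a :: complex) \<noteq> 0" using assms by simp
  have pos: "a + r * s > 0" using assms by (simp add: add_pos_nonneg)
  have d0: "(of_real a + of_real r * of_real s :: complex) \<noteq> 0"
  proof -
    have "(of_real a + of_real r * of_real s :: complex) = of_real (a + r * s)" by simp
    thus ?thesis using pos by (simp only: of_real_eq_0_iff)
  qed
  show z: "z = snd p / of_real a" using assms a0 by (simp add: Fmap_eq)
  show "w = (fst p - (1 - of_real s) * (snd p / of_real a)^2) / (of_real a + of_real r * of_real s)"
    using assms d0 a0 by (simp add: Fmap_eq field_simps)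
qed

lemma shift:
  assumes "0 < a" "0 \<le> v" "0 < r"
  shows "Fmap a r v (z, (of_real (a + r * u) * w + of_real (v - u) * z^2) / of_real (a + r * v)) = Fmap a r u (z,w)"
proof -
  have pos: "a + r * v > 0" using assms by (simp add: add_pos_nonneg)
  hence nz: "(of_real a + of_real r * of_real v :: complex) \<noteq> 0" by (rule nzc)
  show ?thesis using nz unfolding Fmap_eq
    by (simp add: field_simps)
qed

lemma normW:
  fixes z w :: complex
  assumes "0 \<le> u" "u < v" "v \<le> 1" "0 < a" "0 < r" "norm z \<le> (1 + u) * r" "norm w \<le> (1 + 2 * u) * r"
  shows "norm ((of_real (a + r * u) * w + of_real (v - u) * z^2) / of_real (a + r * v)) < (1 + 2 * v) * r"
proof -
  have au: "a + r * u > 0" using assms by (simp add: add_pos_nonneg)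
  have av: "a + r * v > 0" using assms by (simp add: add_pos_nonneg)
  have e1: "norm (of_real (a + r * u) * w) = (a + r * u) * norm w"
    by (simp only: norm_mult norm_of_real abs_of_pos[OF au])
  have e2: "norm (of_real (v - u) * z^2) = (v - u) * norm z ^ 2"
    using assms by (simp only: norm_mult norm_of_real norm_power)
  have n1: "norm (of_real (a + r * u) * w + of_real (v - u) * z^2) \<le> (a + r * u) * norm w + (v - u) * norm z ^ 2"
    using norm_triangle_ineq[of "of_real (a + r * u) * w" "of_real (v - u) * z^2"] e1 e2 by linarith
  have n2: "(a + r * u) * norm w \<le> (a + r * u) * ((1 + 2 * u) * r)"
    using au assms by (intro mult_left_mono) auto
  have n3: "norm z ^ 2 \<le> ((1 + u) * r)^2"
    using assms by (intro power_mono) auto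
  have n4: "(v - u) * norm z ^ 2 \<le> (v - u) * ((1 + u) * r)^2"
    using n3 assms by (intro mult_left_mono) auto
  have id: "(1 + 2 * v) * r * (a + r * v) - ((a + r * u) * ((1 + 2 * u) * r) + (v - u) * ((1 + u) * r)^2)
      = r * (v - u) * (2 * a + 2 * r * v - r * u^2)"
    by (simp add: algebra_simps power2_eq_square)
  have "u^2 \<le> u" using assms by (simp add: power2_eq_square mult_left_le_one_le)
  hence "r * u^2 \<le> r * u" using assms by simp
  moreover have "r * u < r * v" using assms by simp
  moreover have "0 < r * v" using assms by simp
  moreover have "2 * a + 2 * r * v - r * u^2 = 2 * a + r * v + (r * v - r * u^2)" by simp
  ultimately have "2 * a + 2 * r * v - r * u^2 > 0" using assms by linarith
  hence "r * (v - u) * (2 * a + 2 * r * v - r * u^2) > 0" using assms by simp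
  hence key: "(a + r * u) * norm w + (v - u) * norm z ^ 2 < (1 + 2 * v) * r * (a + r * v)"
    using id n2 n4 by linarith
  have "norm ((of_real (a + r * u) * w + of_real (v - u) * z^2) / of_real (a + r * v))
     = norm (of_real (a + r * u) * w + of_real (v - u) * z^2) / (a + r * v)"
    by (simp only: norm_divide norm_of_real abs_of_pos[OF av])
  also have "\<dots> < (1 + 2 * v) * r"
    using n1 key av by (simp add: pos_divide_less_eq)
  finally show ?thesis .
qed

theorem mainTheorem7:
  fixes a r :: real
  assumes "0 < a" and "a < 1" and "0 < r"
  shows "(\<forall>t s. 0 \<le> t \<and> t < s \<and> s \<le> 1 \<longrightarrow> compactly_contained (Omega a r t) (Omega a r s))
       \<and> (\<forall>t. 0 < t \<and> t \<le> 1 \<longrightarrow> Omega a r t = (\<Union>t'\<in>{0..<t}. Omega a r t'))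
       \<and> (\<forall>t. 0 \<le> t \<and> t < 1 \<longrightarrow> closure (Omega a r t) = (\<Inter>s\<in>{t<..1}. Omega a r s))"
proof -
  note a0 = assms(1) and r0 = assms(3)
  have inc: "closure (Omega a r t) \<subseteq> Omega a r s" if hh: "0 \<le> t" "t < s" "s \<le> 1" for t s
  proof
    fix p assume "p \<in> closure (Omega a r t)"
    then obtain z w where zw: "(z,w) \<in> Dc r t" "p = Fmap a r t (z,w)"
      using closure_Omega[OF hh(1) r0] by auto
    define w' where "w' = (of_real (a + r * t) * w + of_real (s - t) * z^2) / of_real (a + r * s)"
    have "p = Fmap a r s (z, w')"
      unfolding w'_def using shift[OF a0 _ r0, where v=s and u=t and z=z and w=w] hh zw by simp
    moreover have "norm w' < (1 + 2 * s) * r"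
      unfolding w'_def using normW[OF hh a0 r0, where z=z and w=w] zw by (auto simp: Dc_def)
    moreover have "(1 + t) * r < (1 + s) * r" using hh r0 by simp
    hence "norm z < (1 + s) * r" using zw by (auto simp: Dc_def)
    ultimately show "p \<in> Omega a r s" by (auto simp: Omega_def Delta_def)
  qed
  have P1: "\<forall>t s. 0 \<le> t \<and> t < s \<and> s \<le> 1 \<longrightarrow> compactly_contained (Omega a r t) (Omega a r s)"
  proof (intro allI impI)
    fix t s :: real assume h: "0 \<le> t \<and> t < s \<and> s \<le> 1"
    have ce: "closure (Omega a r t) = Fmap a r t ` Dc r t" using closure_Omega h r0 by auto
    have "compact (closure (Omega a r t))"
      unfolding ce Dc_def
      by (intro compact_continuous_image Fmap_cont compact_Times compact_cball)
    thus "compactly_contained (Omega a r t) (Omega a r s)"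
      using inc h unfolding compactly_contained_def by auto
  qed
  have P2: "\<forall>t. 0 < t \<and> t \<le> 1 \<longrightarrow> Omega a r t = (\<Union>t'\<in>{0..<t}. Omega a r t')"
  proof (intro allI impI equalityI subsetI)
    fix t p assume h: "0 < t \<and> t \<le> 1" and p: "p \<in> Omega a r t"
    then obtain z w where zw: "(z,w) \<in> Delta r t" "p = Fmap a r t (z,w)"
      by (auto simp: Omega_def)
    define W where "W = (\<lambda>v. (of_real (a + r * t) * w + of_real (v - t) * z^2) / of_real (a + r * v))"
    have Wt: "W t = w" using nzc[of a r t] h a0 r0 unfolding W_def
      by (simp add: add_pos_nonneg)
    have nzt: "of_real (a + r * t) \<noteq> (0::complex)" using h a0 r0
      by (metis add_pos_nonneg less_le mult_nonneg_nonneg of_real_eq_0_iff)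
    have lim1: "((\<lambda>v. norm (W v) - (1 + 2 * v) * r) \<longlongrightarrow> norm (W t) - (1 + 2 * t) * r) (at_left t)"
      unfolding W_def using nzt by (intro tendsto_intros) auto
    have lim2: "((\<lambda>v. norm z - (1 + v) * r) \<longlongrightarrow> norm z - (1 + t) * r) (at_left t)"
      by (intro tendsto_intros)
    have "\<forall>\<^sub>F v in at_left t. norm (W v) - (1 + 2 * v) * r < 0"
      using order_tendstoD(2)[OF lim1, of 0] zw Wt by (auto simp: Delta_def)
    moreover have "\<forall>\<^sub>F v in at_left t. norm z - (1 + v) * r < 0"
      using order_tendstoD(2)[OF lim2, of 0] zw by (auto simp: Delta_def)
    moreover have "\<forall>\<^sub>F v in at_left t. 0 < v \<and> v < t"
      using eventually_at_left_real[of 0 t] h by simp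
    ultimately have "\<forall>\<^sub>F v in at_left t. norm (W v) - (1 + 2 * v) * r < 0 \<and> norm z - (1 + v) * r < 0 \<and> 0 < v \<and> v < t"
      by eventually_elim auto
    then obtain v where v: "norm (W v) - (1 + 2 * v) * r < 0" "norm z - (1 + v) * r < 0" "0 < v" "v < t"
      using eventually_happens[of _ "at_left t"] by (auto simp: trivial_limit_at_left_real)
    have "p = Fmap a r v (z, W v)"
      unfolding W_def using shift[OF a0 _ r0, where v=v and u=t and z=z and w=w] v zw by simp
    hence "p \<in> Omega a r v" using v by (auto simp: Omega_def Delta_def)
    thus "p \<in> (\<Union>t'\<in>{0..<t}. Omega a r t')" using v by auto
  next
    fix t p assume h: "0 < t \<and> t \<le> 1" and p: "p \<in> (\<Union>t'\<in>{0..<t}. Omega a r t')"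
    then obtain t' where "t' \<in> {0..<t}" "p \<in> Omega a r t'" by auto
    thus "p \<in> Omega a r t" using inc[of t' t] h closure_subset by auto
  qed
  have P3: "\<forall>t. 0 \<le> t \<and> t < 1 \<longrightarrow> closure (Omega a r t) = (\<Inter>s\<in>{t<..1}. Omega a r s)"
  proof (intro allI impI equalityI subsetI)
    fix t p assume h: "0 \<le> t \<and> t < 1" and p: "p \<in> closure (Omega a r t)"
    show "p \<in> (\<Inter>s\<in>{t<..1}. Omega a r s)"
    proof (rule INT_I)
      fix s assume "s \<in> {t<..1}"
      thus "p \<in> Omega a r s" using inc[of t s] h p by auto
    qed
  next
    fix t p assume h: "0 \<le> t \<and> t < 1" and p: "p \<in> (\<Inter>s\<in>{t<..1}. Omega a r s)"
    define z where "z = snd p / of_real a"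
    define W where "W = (\<lambda>s. (fst p - (1 - of_real s) * z^2) / (of_real a + of_real r * of_real s))"
    have mem: "norm z < (1 + s) * r \<and> norm (W s) < (1 + 2 * s) * r" if "t < s" "s \<le> 1" for s
    proof -
      have "p \<in> Omega a r s" using p that by auto
      then obtain z' w' where zw: "(z',w') \<in> Delta r s" "p = Fmap a r s (z',w')"
        by (auto simp: Omega_def)
      have "z' = z" "w' = W s"
        using Fmap_inv[OF a0 _ r0 zw(2)] that h unfolding z_def W_def by auto
      thus ?thesis using zw by (auto simp: Delta_def)
    qed
    have ev: "\<forall>\<^sub>F s in at_right t. t < s \<and> s \<le> 1"
      using eventually_at_right_real[of t 1] h by (auto elim: eventually_mono)
    have nzt: "(of_real a + of_real r * of_real t :: complex) \<noteq> 0"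
      using h a0 r0 by (intro nzc) (simp add: add_pos_nonneg)
    have lim1: "((\<lambda>s. norm (W s)) \<longlongrightarrow> norm (W t)) (at_right t)"
      unfolding W_def using nzt by (intro tendsto_intros) auto
    have lim2: "((\<lambda>s. (1 + 2 * s) * r) \<longlongrightarrow> (1 + 2 * t) * r) (at_right t)"
      by (intro tendsto_intros)
    have lim3: "((\<lambda>s. (1 + s) * r) \<longlongrightarrow> (1 + t) * r) (at_right t)"
      by (intro tendsto_intros)
    have e1: "\<forall>\<^sub>F s in at_right t. norm (W s) \<le> (1 + 2 * s) * r"
      using ev by (rule eventually_mono) (meson mem less_imp_le)
    have e2: "\<forall>\<^sub>F s in at_right t. norm z \<le> (1 + s) * r"
      using ev by (rule eventually_mono) (meson mem less_imp_le)
    have b1: "norm (W t) \<le> (1 + 2 * t) * r"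
      by (rule tendsto_le[OF _ lim2 lim1 e1]) simp
    have b2: "norm z \<le> (1 + t) * r"
      by (rule tendsto_le[OF _ lim3 tendsto_const e2]) simp
    have "p \<in> Omega a r 1" using p h by auto
    then obtain z' w' where zw: "p = Fmap a r 1 (z',w')"
      by (auto simp: Omega_def)
    have "snd p = of_real a * z" unfolding z_def using a0 by simp
    moreover have "fst p = (1 - of_real t) * z^2 + (of_real a + of_real r * of_real t) * W t"
      unfolding W_def using nzt by (simp add: field_simps)
    ultimately have "p = Fmap a r t (z, W t)" by (simp add: Fmap_eq prod_eq_iff)
    moreover have "(z, W t) \<in> Dc r t" using b1 b2 by (simp add: Dc_def)
    ultimately show "p \<in> closure (Omega a r t)"
      using closure_Omega[of t r a] h r0 by auto
  qed
  show ?thesis using P1 P2 P3 by blast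
qed

end
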